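(* Every admissible Novikov algebra is an anti-pre-Lie algebra.
   Context: All vector spaces are finite-dimensional over a field $\mathbb F$ of characteristic $0$. For a bilinear operation $\circ$ on $A$ write $[x,y]=x\circ y-y\circ x$. An anti-pre-Lie algebra is $(A,\circ)$ such that for all $x,y,z$: (i) $x\circ(y\circ z)-y\circ(x\circ z)=[y,x]\circ z$, and (ii) $[x,y]\circ z+[y,z]\circ x+[z,x]\circ y=0$. An admissible Novikov algebra is $(A,\circ)$ satisfying (i) and $2x\circ[y,z]=(x\circ y)\circ z-(x\circ z)\circ y$ for all $x,y,z\in A$. *)

theory Defs
  imports Complex_Main
begin

definition bilinear_op ::
  "('k::field \<Rightarrow> 'v::ab_group_add \<Rightarrow> 'v) \<Rightarrow> ('v \<Rightarrow> 'v \<Rightarrow> 'v) \<Rightarrow> bool" where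
  "bilinear_op scale m \<longleftrightarrow>
     (\<forall>x y z. m (x + y) z = m x z + m y z) \<and>
     (\<forall>x y z. m x (y + z) = m x y + m x z) \<and>
     (\<forall>a x y. m (scale a x) y = scale a (m x y)) \<and>
     (\<forall>a x y. m x (scale a y) = scale a (m x y))"

definition comm :: "('v::ab_group_add \<Rightarrow> 'v \<Rightarrow> 'v) \<Rightarrow> 'v \<Rightarrow> 'v \<Rightarrow> 'v" where
  "comm m x y = m x y - m y x"

definition anti_pre_Lie :: "('v::ab_group_add \<Rightarrow> 'v \<Rightarrow> 'v) \<Rightarrow> bool" where
  "anti_pre_Lie m \<longleftrightarrow>
     (\<forall>x y z. m x (m y z) - m y (m x z) = m (comm m y x) z) \<and>
     (\<forall>x y z. m (comm m x y) z + m (comm m y z) x + m (comm m z x) y = 0)"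

definition admissible_Novikov :: "('v::ab_group_add \<Rightarrow> 'v \<Rightarrow> 'v) \<Rightarrow> bool" where
  "admissible_Novikov m \<longleftrightarrow>
     (\<forall>x y z. m x (m y z) - m y (m x z) = m (comm m y x) z) \<and>
     (\<forall>x y z. m x (comm m y z) + m x (comm m y z) = m (m x y) z - m (m x z) y)"

end

theory Submission
  imports Defs
begin

lemma three_zero:
  fixes scale :: "'k::field_char_0 \<Rightarrow> 'v::ab_group_add \<Rightarrow> 'v"
  assumes vs: "vector_space scale" and h: "S + S + S = (0::'v)"
  shows "S = 0"
proof -
  interpret vector_space scale by (rule vs)
  have "scale (1/3) (S + S + S) = 0" using h by simp
  hence "scale (1/3) S + scale (1/3) S + scale (1/3) S = 0" by (simp add: scale_right_distrib)
  hence "scale (1/3 + 1/3 + 1/3) S = 0" by (simp only: scale_left_distrib)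
  moreover have "(1/3 + 1/3 + 1/3 :: 'k) = 1" by simp
  ultimately show ?thesis by simp
qed

lemma grp: fixes S T :: "'a::ab_group_add"
  assumes "S = T + T" "T = - S" shows "S + S + S = 0"
proof -
  have "S = -S + -S" using assms by simp
  hence "S + S + S = (-S + -S) + S + S" by simp
  also have "... = 0" by (simp add: algebra_simps)
  finally show ?thesis .
qed

theorem proposition3p3:
  fixes scale :: "'k::field_char_0 \<Rightarrow> 'v::ab_group_add \<Rightarrow> 'v"
    and basis :: "'v set"
    and m :: "'v \<Rightarrow> 'v \<Rightarrow> 'v"
  assumes "finite_dimensional_vector_space scale basis"
    and "bilinear_op scale m"
    and "admissible_Novikov m"
  shows "anti_pre_Lie m"
proof -
  have vs: "vector_space scale" using assms(1) finite_dimensional_vector_space_def by blast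
  have I: "\<And>x y z. m x (m y z) - m y (m x z) = m (comm m y x) z"
   and N: "\<And>x y z. m x (comm m y z) + m x (comm m y z) = m (m x y) z - m (m x z) y"
    using assms(3) unfolding admissible_Novikov_def by blast+
  have add: "\<And>x y z. m (x + y) z = m x z + m y z" "\<And>x y z. m x (y + z) = m x y + m x z"
    using assms(2) unfolding bilinear_op_def by blast+
  have diffL: "\<And>x y z. m (x - y) z = m x z - m y z"
    by (metis add(1) add_diff_cancel eq_diff_eq)
  have diffR: "\<And>x y z. m x (y - z) = m x y - m x z"
    by (metis add(2) add_diff_cancel eq_diff_eq)
  have II: "m (comm m x y) z + m (comm m y z) x + m (comm m z x) y = 0" for x y z
  proof -
    let ?S = "m (comm m x y) z + m (comm m y z) x + m (comm m z x) y"
    let ?T = "m x (comm m y z) + m y (comm m z x) + m z (comm m x y)"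
    define n where "n = (\<lambda>x y z. m x (comm m y z) + m x (comm m y z) - (m (m x y) z - m (m x z) y))"
    define i where "i = (\<lambda>x y z. m x (m y z) - m y (m x z) - m (comm m y x) z)"
    have n0: "n a b c = 0" for a b c using N unfolding n_def by simp
    have i0: "i a b c = 0" for a b c using I unfolding i_def by simp
    have S1': "(?T + ?T) - ?S = n x y z + n y z x + n z x y"
      unfolding n_def comm_def diffR diffL by (simp add: algebra_simps)
    have S2': "?T + ?S = i x y z + i y z x + i z x y"
      unfolding i_def comm_def diffR diffL by (simp add: algebra_simps)
    have S1: "?S = ?T + ?T" using S1' n0 by simp
    have S2: "?T = - ?S" using S2' i0 by (simp add: add_eq_0_iff)
    have "?S + ?S + ?S = 0" using grp[OF S1 S2] .
    thus ?thesis using three_zero[OF vs] by blast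
  qed
  show ?thesis unfolding anti_pre_Lie_def using I II by blast
qed

end
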